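(* Let $\mathscr{X}$ be a totally bounded normed metric space, consider a channel with transition mapping $N$ as described in the context, and let $0\le\delta<m_{\mathscr{Y}}(V_N)$. Then $$C^\delta_N=\sup\Big\{ I_{\tilde\delta/|[\![X]\!]|}(Y;X)\ :\ \tilde\delta\ge0,\ X\in\mathscr{F}_{\tilde\delta},\ \tilde\delta\le \delta/m_{\mathscr{Y}}([\![Y]\!])\Big\}\ \text{bits},$$ where $Y$ is the received UV corresponding to the transmitted UV $X$.
   Context: Uncertain variables (UVs): a UV is a map $U$ from a sample space $\Omega$ to a set; jointly considered UVs share $\Omega$. $[\![U]\!]=\{U(\omega)\}$; $[\![U|w]\!]=\{U(\omega):W(\omega)=w\}$, $[\![U|W]\!]=\{[\![U|w]\!]:w\in[\![W]\!]\}$. An uncertainty function on a set $\mathscr{U}$ is a map $m$ on subsets of $\mathscr{U}$ with $m(\emptyset)=0$, $0<m(S)<\infty$ for nonempty $S$, $\max\{m(S_1),m(S_2)\}\le m(S_1\cup S_2)$. Association: with uncertainty functions $m_{\mathscr{X}},m_{\mathscr{Y}}$ on the value sets of $X,Y$, $\mathscr{A}(X;Y)=\{m_{\mathscr{X}}([\![X|y_1]\!]\cap[\![X|y_2]\!])/m_{\mathscr{X}}([\![X]\!]):y_1\ne y_2\in[\![Y]\!]\}\setminus\{0\}$, $\mathscr{A}(Y;X)=\{m_{\mathscr{Y}}([\![Y|x_1]\!]\cap[\![Y|x_2]\!])/m_{\mathscr{Y}}([\![Y]\!]):x_1\ne x_2\in[\![X]\!]\}\setminus\{0\}$. $\mathscr{A}\succ\delta$: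 all elements $>\delta$ (false for $\emptyset$); $\mathscr{A}\preceq\delta$: all elements $\le\delta$ (true for $\emptyset$). $(X,Y)\stackrel{d}{\leftrightarrow}(\delta_1,\delta_2)$ iff $\mathscr{A}(X;Y)\succ\delta_1,\mathscr{A}(Y;X)\succ\delta_2$; $(X,Y)\stackrel{a}{\leftrightarrow}(\delta_1,\delta_2)$ iff $\mathscr{A}(X;Y)\preceq\delta_1,\mathscr{A}(Y;X)\preceq\delta_2$. $\delta$-mutual information: for UVs $U$ (values in $\mathscr{U}$ with uncertainty function $m_{\mathscr{U}}$) and $W$, points $u,u'\in[\![U]\!]$ are $\delta$-connected via $[\![U|W]\!]$ if there are $w_1,\dots,w_N\in[\![W]\!]$ with $u\in[\![U|w_1]\!]$, $u'\in[\![U|w_N]\!]$, $m_{\mathscr{U}}([\![U|w_i]\!]\cap[\![U|w_{i-1}]\!])/m_{\mathscr{U}}([\![U]\!])>\delta$ for $1<i\le N$; a set is $\delta$-connected if all pairs of its points are. A $\delta$-overlap family $[\![U|W]\!]^*_\delta$ is a family of distinct subsets covering $[\![U]\!]$, of largest cardinality among covering families such that (i) each member is $\delta$-connected and contains some $[\![U|w]\!]$; (ii) distinct members $S_1,S_2$ satisfy $m_{\mathscr{U}}(S_1\cap S_2)\le\delta\, m_{\mathscr{U}}([\![U]\!])$; (iii) each $[\![U|w]\!]$ lies in some member. $I_\delta(U;W)=\log_2|[\![U|W]\!]^*_\delta|$ if such a family exists, else $0$. Channel: $\mathscr{Y}$ is the output set, $N$ maps each $x\in\mathscr{X}$ to a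 set $N(x)\subseteq\mathscr{Y}$ (the possible received points, $S_N(x)=N(x)$); $m_{\mathscr{X}},m_{\mathscr{Y}}$ are uncertainty functions on $\mathscr{X},\mathscr{Y}$ with $m_{\mathscr{Y}}(\mathscr{Y})=1$. $V_N=N(x^* )$ where $x^*$ minimizes $m_{\mathscr{Y}}(N(x))$ over $\mathscr{X}$. A codebook is a discrete set $\mathcal{C}\subseteq\mathscr{X}$; $e_N(x_1,x_2)=m_{\mathscr{Y}}(N(x_1)\cap N(x_2))/m_{\mathscr{Y}}(\mathscr{Y})$; $\mathcal{C}$ is $(N,\delta)$-distinguishable if $e_N(x_1,x_2)\le\delta/|\mathcal{C}|$ for all distinct $x_1,x_2\in\mathcal{C}$; $C^\delta_N=\sup\log_2|\mathcal{C}|$ over $(N,\delta)$-distinguishable codebooks. For a codebook $\mathcal{C}$, the transmitted UV $X$ and received UV $Y$ satisfy $[\![X]\!]=\mathcal{C}$, $[\![Y]\!]=\bigcup_{x\in\mathcal{C}}N(x)$, $[\![Y|x]\!]=\{y\in[\![Y]\!]:y\in N(x)\}$, $[\![X|y]\!]=\{x\in[\![X]\!]:y\in N(x)\}$. Feasible set: $\mathscr{F}_\delta$ is the set of transmitted UVs $X$ with $[\![X]\!]\subseteq\mathscr{X}$ a codebook such that either $(X,Y)\stackrel{d}{\leftrightarrow}(0,\delta/|[\![X]\!]|)$ or $(X,Y)\stackrel{a}{\leftrightarrow}(1,\delta/|[\![X]\!]|)$. *)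

theory Defs
  imports "HOL-Analysis.Analysis"
begin

definition uncertainty_fun :: "'a set \<Rightarrow> ('a set \<Rightarrow> real) \<Rightarrow> bool" where
  "uncertainty_fun U m \<longleftrightarrow>
     m {} = 0 \<and>
     (\<forall>S. S \<subseteq> U \<and> S \<noteq> {} \<longrightarrow> 0 < m S) \<and>
     (\<forall>S1 S2. S1 \<subseteq> U \<and> S2 \<subseteq> U \<longrightarrow> max (m S1) (m S2) \<le> m (S1 \<union> S2))"

text \<open>A codebook is a discrete (here: finite, nonempty) subset of the input space.\<close>
definition codebook :: "'a set \<Rightarrow> 'a set \<Rightarrow> bool" where
  "codebook Xs C \<longleftrightarrow> C \<subseteq> Xs \<and> finite C \<and> C \<noteq> {}"

text \<open>Range of the received UV: [[Y]] = union of N x over the codebook.\<close>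
definition Yrange :: "('a \<Rightarrow> 'b set) \<Rightarrow> 'a set \<Rightarrow> 'b set" where
  "Yrange N C = (\<Union>x\<in>C. N x)"

definition YgX :: "('a \<Rightarrow> 'b set) \<Rightarrow> 'a set \<Rightarrow> 'a \<Rightarrow> 'b set" where
  "YgX N C x = {y \<in> Yrange N C. y \<in> N x}"

definition XgY :: "('a \<Rightarrow> 'b set) \<Rightarrow> 'a set \<Rightarrow> 'b \<Rightarrow> 'a set" where
  "XgY N C y = {x \<in> C. y \<in> N x}"

definition assoc_XY :: "('a set \<Rightarrow> real) \<Rightarrow> ('a \<Rightarrow> 'b set) \<Rightarrow> 'a set \<Rightarrow> real set" where
  "assoc_XY mX N C =
     {mX (XgY N C y1 \<inter> XgY N C y2) / mX C | y1 y2.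
        y1 \<in> Yrange N C \<and> y2 \<in> Yrange N C \<and> y1 \<noteq> y2} - {0}"

definition assoc_YX :: "('b set \<Rightarrow> real) \<Rightarrow> ('a \<Rightarrow> 'b set) \<Rightarrow> 'a set \<Rightarrow> real set" where
  "assoc_YX mY N C =
     {mY (YgX N C x1 \<inter> YgX N C x2) / mY (Yrange N C) | x1 x2.
        x1 \<in> C \<and> x2 \<in> C \<and> x1 \<noteq> x2} - {0}"

definition set_succ :: "real set \<Rightarrow> real \<Rightarrow> bool" where
  "set_succ A d \<longleftrightarrow> A \<noteq> {} \<and> (\<forall>a\<in>A. a > d)"

definition set_preceq :: "real set \<Rightarrow> real \<Rightarrow> bool" where
  "set_preceq A d \<longleftrightarrow> (\<forall>a\<in>A. a \<le> d)"

definition disassoc :: "('a set \<Rightarrow> real) \<Rightarrow> ('b set \<Rightarrow> real) \<Rightarrow> ('a \<Rightarrow> 'b set) \<Rightarrow> 'a set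
    \<Rightarrow> real \<Rightarrow> real \<Rightarrow> bool" where
  "disassoc mX mY N C d1 d2 \<longleftrightarrow> set_succ (assoc_XY mX N C) d1 \<and> set_succ (assoc_YX mY N C) d2"

definition assoc :: "('a set \<Rightarrow> real) \<Rightarrow> ('b set \<Rightarrow> real) \<Rightarrow> ('a \<Rightarrow> 'b set) \<Rightarrow> 'a set
    \<Rightarrow> real \<Rightarrow> real \<Rightarrow> bool" where
  "assoc mX mY N C d1 d2 \<longleftrightarrow> set_preceq (assoc_XY mX N C) d1 \<and> set_preceq (assoc_YX mY N C) d2"

text \<open>Feasible set F_delta, described through the range [[X]] = C of the transmitted UV.\<close>
definition feasible :: "'a set \<Rightarrow> ('a set \<Rightarrow> real) \<Rightarrow> ('b set \<Rightarrow> real) \<Rightarrow> ('a \<Rightarrow> 'b set)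
    \<Rightarrow> real \<Rightarrow> 'a set \<Rightarrow> bool" where
  "feasible Xs mX mY N d C \<longleftrightarrow> codebook Xs C \<and>
     (disassoc mX mY N C 0 (d / real (card C)) \<or> assoc mX mY N C 1 (d / real (card C)))"

text \<open>Generic: U has range R with uncertainty function m; W has range Ws;
  cond w = [[U|w]].\<close>
definition delta_conn_pts :: "('u set \<Rightarrow> real) \<Rightarrow> 'u set \<Rightarrow> 'w set \<Rightarrow> ('w \<Rightarrow> 'u set)
    \<Rightarrow> real \<Rightarrow> 'u \<Rightarrow> 'u \<Rightarrow> bool" where
  "delta_conn_pts m R Ws cond d u u' \<longleftrightarrow>
     (\<exists>ws. ws \<noteq> [] \<and> set ws \<subseteq> Ws \<and> u \<in> cond (hd ws) \<and> u' \<in> cond (last ws) \<and>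
        (\<forall>i. 0 < i \<and> i < length ws \<longrightarrow>
           m (cond (ws ! i) \<inter> cond (ws ! (i - 1))) / m R > d))"

definition delta_conn_set :: "('u set \<Rightarrow> real) \<Rightarrow> 'u set \<Rightarrow> 'w set \<Rightarrow> ('w \<Rightarrow> 'u set)
    \<Rightarrow> real \<Rightarrow> 'u set \<Rightarrow> bool" where
  "delta_conn_set m R Ws cond d S \<longleftrightarrow> (\<forall>u\<in>S. \<forall>u'\<in>S. delta_conn_pts m R Ws cond d u u')"

definition admissible_family :: "('u set \<Rightarrow> real) \<Rightarrow> 'u set \<Rightarrow> 'w set \<Rightarrow> ('w \<Rightarrow> 'u set)
    \<Rightarrow> real \<Rightarrow> 'u set set \<Rightarrow> bool" where
  "admissible_family m R Ws cond d F \<longleftrightarrow>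
     finite F \<and> (\<forall>S\<in>F. S \<subseteq> R) \<and> \<Union>F = R \<and>
     (\<forall>S\<in>F. delta_conn_set m R Ws cond d S \<and> (\<exists>w\<in>Ws. cond w \<subseteq> S)) \<and>
     (\<forall>S1\<in>F. \<forall>S2\<in>F. S1 \<noteq> S2 \<longrightarrow> m (S1 \<inter> S2) \<le> d * m R) \<and>
     (\<forall>w\<in>Ws. \<exists>S\<in>F. cond w \<subseteq> S)"

definition overlap_family :: "('u set \<Rightarrow> real) \<Rightarrow> 'u set \<Rightarrow> 'w set \<Rightarrow> ('w \<Rightarrow> 'u set)
    \<Rightarrow> real \<Rightarrow> 'u set set \<Rightarrow> bool" where
  "overlap_family m R Ws cond d F \<longleftrightarrow> admissible_family m R Ws cond d F \<and>
     (\<forall>F'. admissible_family m R Ws cond d F' \<longrightarrow> card F' \<le> card F)"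

definition delta_MI :: "('u set \<Rightarrow> real) \<Rightarrow> 'u set \<Rightarrow> 'w set \<Rightarrow> ('w \<Rightarrow> 'u set)
    \<Rightarrow> real \<Rightarrow> real" where
  "delta_MI m R Ws cond d =
     (if \<exists>F. overlap_family m R Ws cond d F
      then log 2 (real (card (SOME F. overlap_family m R Ws cond d F))) else 0)"

definition MI_YX :: "('b set \<Rightarrow> real) \<Rightarrow> ('a \<Rightarrow> 'b set) \<Rightarrow> 'a set \<Rightarrow> real \<Rightarrow> real" where
  "MI_YX mY N C d = delta_MI mY (Yrange N C) C (YgX N C) d"

definition e_N :: "('b set \<Rightarrow> real) \<Rightarrow> 'b set \<Rightarrow> ('a \<Rightarrow> 'b set) \<Rightarrow> 'a \<Rightarrow> 'a \<Rightarrow> real" where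
  "e_N mY Ys N x1 x2 = mY (N x1 \<inter> N x2) / mY Ys"

definition distinguishable :: "'a set \<Rightarrow> ('b set \<Rightarrow> real) \<Rightarrow> 'b set \<Rightarrow> ('a \<Rightarrow> 'b set)
    \<Rightarrow> real \<Rightarrow> 'a set \<Rightarrow> bool" where
  "distinguishable Xs mY Ys N d C \<longleftrightarrow> codebook Xs C \<and>
     (\<forall>x1\<in>C. \<forall>x2\<in>C. x1 \<noteq> x2 \<longrightarrow> e_N mY Ys N x1 x2 \<le> d / real (card C))"

definition capacity :: "'a set \<Rightarrow> ('b set \<Rightarrow> real) \<Rightarrow> 'b set \<Rightarrow> ('a \<Rightarrow> 'b set) \<Rightarrow> real \<Rightarrow> ereal" where
  "capacity Xs mY Ys N d =
     Sup ((\<lambda>C. ereal (log 2 (real (card C)))) ` {C. distinguishable Xs mY Ys N d C})"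

end

theory Submission
  imports Defs
begin

theorem theorem7:
  fixes Xs :: "'a::real_normed_vector set" and Ys :: "'b set"
    and N :: "'a \<Rightarrow> 'b set"
    and mX :: "'a set \<Rightarrow> real" and mY :: "'b set \<Rightarrow> real"
    and xstar :: 'a and \<delta> :: real
  assumes "totally_bounded Xs"
    and "\<forall>x\<in>Xs. N x \<subseteq> Ys"
    and "uncertainty_fun Xs mX"
    and "uncertainty_fun Ys mY"
    and "mY Ys = 1"
    and "xstar \<in> Xs" and "\<forall>x\<in>Xs. mY (N xstar) \<le> mY (N x)"
    and "0 \<le> \<delta>" and "\<delta> < mY (N xstar)"
  shows "capacity Xs mY Ys N \<delta> =
    Sup {ereal (MI_YX mY N C (\<delta>' / real (card C))) | \<delta>' C.
           0 \<le> \<delta>' \<and> feasible Xs mX mY N \<delta>' C \<and> \<delta>' \<le> \<delta> / mY (Yrange N C)}"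
proof -
  note U = assms(4)[unfolded uncertainty_fun_def]
  note UX = assms(3)[unfolded uncertainty_fun_def]
  have m0: "mY {} = 0" using U by simp
  have mono: "mY A \<le> mY B" if "A \<subseteq> B" "B \<subseteq> Ys" for A B
  proof -
    have "max (mY A) (mY B) \<le> mY (A \<union> B)" using U that by blast
    moreover have "A \<union> B = B" using that by blast
    ultimately show ?thesis by simp
  qed
  have monoX: "mX A \<le> mX B" if "A \<subseteq> B" "B \<subseteq> Xs" for A B
  proof -
    have "max (mX A) (mX B) \<le> mX (A \<union> B)" using UX that by blast
    moreover have "A \<union> B = B" using that by blast
    ultimately show ?thesis by simp
  qed
  have pos: "0 < mY S" if "S \<subseteq> Ys" "S \<noteq> {}" for S using U that by blast
  have posX: "0 < mX S" if "S \<subseteq> Xs" "S \<noteq> {}" for S using UX that by blast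
  have Nmin: "mY (N xstar) \<le> mY (N x)" if "x \<in> Xs" for x using assms(7) that by blast
  have Nsub: "N x \<subseteq> Ys" if "x \<in> Xs" for x using assms(2) that by blast
  have Nne: "N x \<noteq> {}" if "x \<in> Xs" for x
    using Nmin[OF that] m0 assms(8,9) by force
  have YgX_eq: "YgX N C x = N x" if "x \<in> C" for C x
    using that by (auto simp: YgX_def Yrange_def)
  have R_sub: "Yrange N C \<subseteq> Ys" if "C \<subseteq> Xs" for C
    using that assms(2) by (auto simp: Yrange_def)
  have R_pos: "0 < mY (Yrange N C)" if "codebook Xs C" for C
  proof -
    from that obtain x where x: "x \<in> C" "C \<subseteq> Xs" by (auto simp: codebook_def)
    then have "N x \<subseteq> Yrange N C" by (auto simp: Yrange_def)
    moreover have "N x \<noteq> {}" using Nne x by blast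
    ultimately show ?thesis using pos R_sub x by blast
  qed
  have cardpos: "0 < card C" if "codebook Xs C" for C
    using that by (auto simp: codebook_def card_gt_0_iff)
  have dle: "\<delta> / real (card C) \<le> \<delta>" if "codebook Xs C" for C
  proof -
    have "1 \<le> real (card C)" using cardpos[OF that] by simp
    then have "\<delta> * 1 \<le> \<delta> * real (card C)" using assms(8) by (intro mult_left_mono) auto
    then show ?thesis using assms(8) by (simp add: divide_le_eq)
  qed
  have bound: "\<exists>g. inj_on g F \<and> g ` F \<subseteq> C \<and> (\<forall>S\<in>F. N (g S) \<subseteq> S)"
    if cb: "codebook Xs C" and dd: "d * mY (Yrange N C) \<le> \<delta> / real (card C)"
      and adm: "admissible_family mY (Yrange N C) C (YgX N C) d F" for C d F
  proof -
    have CX: "C \<subseteq> Xs" using cb by (simp add: codebook_def)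
    have "\<forall>S\<in>F. \<exists>w\<in>C. YgX N C w \<subseteq> S" using adm by (simp add: admissible_family_def)
    then obtain g where g: "\<And>S. S \<in> F \<Longrightarrow> g S \<in> C \<and> YgX N C (g S) \<subseteq> S" by metis
    then have g2: "\<And>S. S \<in> F \<Longrightarrow> N (g S) \<subseteq> S" using YgX_eq by metis
    have FR: "\<And>S. S \<in> F \<Longrightarrow> S \<subseteq> Yrange N C" using adm by (simp add: admissible_family_def)
    have ov: "\<And>S1 S2. S1 \<in> F \<Longrightarrow> S2 \<in> F \<Longrightarrow> S1 \<noteq> S2 \<Longrightarrow> mY (S1 \<inter> S2) \<le> d * mY (Yrange N C)"
      using adm by (simp add: admissible_family_def)
    have "inj_on g F"
    proof (rule inj_onI, rule ccontr)
      fix S1 S2 assume S: "S1 \<in> F" "S2 \<in> F" "g S1 = g S2" "S1 \<noteq> S2"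
      have "N (g S1) \<subseteq> S1 \<inter> S2" using g2[OF S(1)] g2[OF S(2)] S(3) by simp
      moreover have "S1 \<inter> S2 \<subseteq> Ys" using FR S R_sub CX by blast
      ultimately have "mY (N (g S1)) \<le> mY (S1 \<inter> S2)" by (rule mono)
      also have "\<dots> \<le> \<delta>" using ov[OF S(1,2,4)] dd dle[OF cb] by linarith
      also have "\<dots> < mY (N xstar)" by (rule assms(9))
      also have "\<dots> \<le> mY (N (g S1))" using Nmin g S CX by blast
      finally show False by simp
    qed
    then show ?thesis using g g2 by blast
  qed
  have cap_ge: "ereal (log 2 (real (card C))) \<le> capacity Xs mY Ys N \<delta>"
    if "distinguishable Xs mY Ys N \<delta> C" for C
    unfolding capacity_def using that by (auto intro!: SUP_upper)
  have cap0: "0 \<le> capacity Xs mY Ys N \<delta>"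
  proof -
    have "distinguishable Xs mY Ys N \<delta> {xstar}"
      using assms(6) by (simp add: distinguishable_def codebook_def)
    from cap_ge[OF this] show ?thesis by (simp add: zero_ereal_def)
  qed
  have adm_le_cap: "ereal (log 2 (real (card F))) \<le> capacity Xs mY Ys N \<delta>"
    if cb: "codebook Xs C" and dd: "d * mY (Yrange N C) \<le> \<delta> / real (card C)"
      and adm: "admissible_family mY (Yrange N C) C (YgX N C) d F" for C d F
  proof (cases "F = {}")
    case True then show ?thesis using cap0 by (simp add: zero_ereal_def log_def)
  next
    case False
    obtain g where g: "inj_on g F" "g ` F \<subseteq> C" "\<forall>S\<in>F. N (g S) \<subseteq> S"
      using bound[OF cb dd adm] by blast
    have CX: "C \<subseteq> Xs" and fC: "finite C" using cb by (auto simp: codebook_def)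
    have fF: "finite F" using adm by (simp add: admissible_family_def)
    have FR: "\<And>S. S \<in> F \<Longrightarrow> S \<subseteq> Yrange N C" using adm by (simp add: admissible_family_def)
    have ov: "\<And>S1 S2. S1 \<in> F \<Longrightarrow> S2 \<in> F \<Longrightarrow> S1 \<noteq> S2 \<Longrightarrow> mY (S1 \<inter> S2) \<le> d * mY (Yrange N C)"
      using adm by (simp add: admissible_family_def)
    define C' where "C' = g ` F"
    have cc: "card C' = card F" unfolding C'_def using g(1) by (rule card_image)
    have cb': "codebook Xs C'" using g(2) CX fF False by (auto simp: codebook_def C'_def)
    have cle: "card C' \<le> card C" using g(2) fC by (simp add: C'_def card_mono)
    have c'pos: "0 < card C'" using cardpos[OF cb'] .
    have dd': "\<delta> / real (card C) \<le> \<delta> / real (card C')"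
      using cle c'pos assms(8) by (simp add: frac_le)
    have "distinguishable Xs mY Ys N \<delta> C'"
      unfolding distinguishable_def
    proof (intro conjI ballI impI)
      show "codebook Xs C'" by (rule cb')
      fix x1 x2 assume x: "x1 \<in> C'" "x2 \<in> C'" "x1 \<noteq> x2"
      then obtain S1 S2 where S: "S1 \<in> F" "S2 \<in> F" "x1 = g S1" "x2 = g S2" by (auto simp: C'_def)
      then have ne: "S1 \<noteq> S2" using x by blast
      have "N x1 \<inter> N x2 \<subseteq> S1 \<inter> S2" using g(3) S by blast
      moreover have "S1 \<inter> S2 \<subseteq> Ys" using FR S R_sub CX by blast
      ultimately have "mY (N x1 \<inter> N x2) \<le> mY (S1 \<inter> S2)" by (rule mono)
      also have "\<dots> \<le> \<delta> / real (card C')" using ov[OF S(1,2) ne] dd dd' by linarith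
      finally show "e_N mY Ys N x1 x2 \<le> \<delta> / real (card C')"
        by (simp add: e_N_def assms(5))
    qed
    from cap_ge[OF this] cc show ?thesis by simp
  qed
  have MI_eq: "MI_YX mY N C ((\<delta> / mY (Yrange N C)) / real (card C)) = log 2 (real (card C))"
    if dist: "distinguishable Xs mY Ys N \<delta> C" for C
  proof -
    have cb: "codebook Xs C" using dist by (simp add: distinguishable_def)
    have CX: "C \<subseteq> Xs" and fC: "finite C" using cb by (auto simp: codebook_def)
    define R where "R = Yrange N C"
    define d where "d = (\<delta> / mY R) / real (card C)"
    have Rp: "0 < mY R" using R_pos[OF cb] by (simp add: R_def)
    have dR: "d * mY R = \<delta> / real (card C)" using Rp by (simp add: d_def field_simps)
    have ovN: "mY (N x1 \<inter> N x2) \<le> \<delta> / real (card C)" if "x1 \<in> C" "x2 \<in> C" "x1 \<noteq> x2" for x1 x2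
      using dist that by (simp add: distinguishable_def e_N_def assms(5))
    have injN: "inj_on N C"
    proof (rule inj_onI, rule ccontr)
      fix x1 x2 assume x: "x1 \<in> C" "x2 \<in> C" "N x1 = N x2" "x1 \<noteq> x2"
      have "mY (N x1) \<le> \<delta>" using ovN[OF x(1,2,4)] x(3) dle[OF cb] by simp
      moreover have "mY (N xstar) \<le> mY (N x1)" using Nmin x CX by blast
      ultimately show False using assms(9) by simp
    qed
    define F0 where "F0 = N ` C"
    have cF0: "card F0 = card C" unfolding F0_def using injN by (rule card_image)
    have adm0: "admissible_family mY R C (YgX N C) d F0"
      unfolding admissible_family_def
    proof (intro conjI)
      show "finite F0" using fC by (simp add: F0_def)
      show "\<forall>S\<in>F0. S \<subseteq> R" by (auto simp: F0_def R_def Yrange_def)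
      show "\<Union> F0 = R" by (auto simp: F0_def R_def Yrange_def)
      show "\<forall>S\<in>F0. delta_conn_set mY R C (YgX N C) d S \<and> (\<exists>w\<in>C. YgX N C w \<subseteq> S)"
      proof
        fix S assume "S \<in> F0"
        then obtain x where x: "x \<in> C" "S = N x" by (auto simp: F0_def)
        have "delta_conn_set mY R C (YgX N C) d S"
          unfolding delta_conn_set_def delta_conn_pts_def
        proof (intro ballI)
          fix u u' assume "u \<in> S" "u' \<in> S"
          then show "\<exists>ws. ws \<noteq> [] \<and> set ws \<subseteq> C \<and> u \<in> YgX N C (hd ws) \<and> u' \<in> YgX N C (last ws) \<and>
            (\<forall>i. 0 < i \<and> i < length ws \<longrightarrow> mY (YgX N C (ws ! i) \<inter> YgX N C (ws ! (i - 1))) / mY R > d)"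
            using x YgX_eq[OF x(1)] by (intro exI[of _ "[x]"]) auto
        qed
        moreover have "YgX N C x \<subseteq> S" using YgX_eq[OF x(1)] x by simp
        ultimately show "delta_conn_set mY R C (YgX N C) d S \<and> (\<exists>w\<in>C. YgX N C w \<subseteq> S)"
          using x by blast
      qed
      show "\<forall>S1\<in>F0. \<forall>S2\<in>F0. S1 \<noteq> S2 \<longrightarrow> mY (S1 \<inter> S2) \<le> d * mY R"
        using ovN dR by (auto simp: F0_def)
      show "\<forall>w\<in>C. \<exists>S\<in>F0. YgX N C w \<subseteq> S"
        using YgX_eq by (auto simp: F0_def)
    qed
    have le: "card F \<le> card C" if admF: "admissible_family mY R C (YgX N C) d F" for F
    proof -
      obtain g where g: "inj_on g F" "g ` F \<subseteq> C"
        using bound[OF cb _ admF[unfolded R_def]] dR by (auto simp: R_def)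
      have "card F = card (g ` F)" using g(1) by (simp add: card_image)
      also have "\<dots> \<le> card C" using g(2) fC by (simp add: card_mono)
      finally show ?thesis .
    qed
    have ov0: "overlap_family mY R C (YgX N C) d F0"
      unfolding overlap_family_def using adm0 le cF0 by simp
    then have ex: "\<exists>F. overlap_family mY R C (YgX N C) d F" by blast
    define F where "F = (SOME F. overlap_family mY R C (YgX N C) d F)"
    have oF: "overlap_family mY R C (YgX N C) d F" unfolding F_def using ex by (rule someI_ex)
    have "card F = card C"
      using oF ov0 le cF0 unfolding overlap_family_def by (metis antisym)
    have "MI_YX mY N C d = log 2 (real (card F))"
      unfolding MI_YX_def delta_MI_def R_def[symmetric] using ex
      by (simp only: if_True F_def[symmetric])
    then show ?thesis using \<open>card F = card C\<close> by (simp add: d_def R_def)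
  qed
  show ?thesis
  proof (rule antisym)
    show "capacity Xs mY Ys N \<delta> \<le> Sup {ereal (MI_YX mY N C (\<delta>' / real (card C))) | \<delta>' C.
           0 \<le> \<delta>' \<and> feasible Xs mX mY N \<delta>' C \<and> \<delta>' \<le> \<delta> / mY (Yrange N C)}"
      unfolding capacity_def
    proof (rule SUP_least)
      fix C assume "C \<in> {C. distinguishable Xs mY Ys N \<delta> C}"
      then have dist: "distinguishable Xs mY Ys N \<delta> C" by simp
      have cb: "codebook Xs C" using dist by (simp add: distinguishable_def)
      have CX: "C \<subseteq> Xs" using cb by (auto simp: codebook_def)
      define \<delta>' where "\<delta>' = \<delta> / mY (Yrange N C)"
      have Rp: "0 < mY (Yrange N C)" using R_pos[OF cb] .
      have d0: "0 \<le> \<delta>'" using Rp assms(8) by (simp add: \<delta>'_def)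
      have ovN: "mY (N x1 \<inter> N x2) \<le> \<delta> / real (card C)" if "x1 \<in> C" "x2 \<in> C" "x1 \<noteq> x2" for x1 x2
        using dist that by (simp add: distinguishable_def e_N_def assms(5))
      have "assoc mX mY N C 1 (\<delta>' / real (card C))"
        unfolding assoc_def set_preceq_def
      proof (intro conjI ballI)
        fix a assume "a \<in> assoc_XY mX N C"
        then obtain y1 y2 where a: "a = mX (XgY N C y1 \<inter> XgY N C y2) / mX C"
          by (auto simp: assoc_XY_def)
        have "mX (XgY N C y1 \<inter> XgY N C y2) \<le> mX C"
          using CX by (intro monoX) (auto simp: XgY_def)
        moreover have "0 < mX C" using cb by (intro posX) (auto simp: codebook_def)
        ultimately show "a \<le> 1" using a by simp
      next
        fix a assume "a \<in> assoc_YX mY N C"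
        then obtain x1 x2 where x: "x1 \<in> C" "x2 \<in> C" "x1 \<noteq> x2"
          and a: "a = mY (YgX N C x1 \<inter> YgX N C x2) / mY (Yrange N C)"
          by (auto simp: assoc_YX_def)
        have "a = mY (N x1 \<inter> N x2) / mY (Yrange N C)" using a YgX_eq x by simp
        also have "\<dots> \<le> (\<delta> / real (card C)) / mY (Yrange N C)"
          using divide_right_mono[OF ovN[OF x], of "mY (Yrange N C)"] Rp by simp
        also have "\<dots> = \<delta>' / real (card C)" by (simp add: \<delta>'_def)
        finally show "a \<le> \<delta>' / real (card C)" .
      qed
      then have "feasible Xs mX mY N \<delta>' C" using cb by (simp add: feasible_def)
      then have mem: "ereal (MI_YX mY N C (\<delta>' / real (card C))) \<in> {ereal (MI_YX mY N C (\<delta>' / real (card C))) | \<delta>' C.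
           0 \<le> \<delta>' \<and> feasible Xs mX mY N \<delta>' C \<and> \<delta>' \<le> \<delta> / mY (Yrange N C)}"
        using d0 by (simp only: mem_Collect_eq) (intro exI[of _ "\<delta>'"] exI[of _ C] conjI refl, auto simp: \<delta>'_def)
      have "ereal (log 2 (real (card C))) = ereal (MI_YX mY N C (\<delta>' / real (card C)))"
        using MI_eq[OF dist] by (simp add: \<delta>'_def)
      then show "ereal (log 2 (real (card C))) \<le> Sup {ereal (MI_YX mY N C (\<delta>' / real (card C))) | \<delta>' C.
           0 \<le> \<delta>' \<and> feasible Xs mX mY N \<delta>' C \<and> \<delta>' \<le> \<delta> / mY (Yrange N C)}"
        using mem by (simp add: Sup_upper)
    qed
  next
    show "Sup {ereal (MI_YX mY N C (\<delta>' / real (card C))) | \<delta>' C.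
           0 \<le> \<delta>' \<and> feasible Xs mX mY N \<delta>' C \<and> \<delta>' \<le> \<delta> / mY (Yrange N C)} \<le> capacity Xs mY Ys N \<delta>"
    proof (rule Sup_least)
      fix b assume "b \<in> {ereal (MI_YX mY N C (\<delta>' / real (card C))) | \<delta>' C.
           0 \<le> \<delta>' \<and> feasible Xs mX mY N \<delta>' C \<and> \<delta>' \<le> \<delta> / mY (Yrange N C)}"
      then obtain \<delta>' C where b: "b = ereal (MI_YX mY N C (\<delta>' / real (card C)))"
        and d0: "0 \<le> \<delta>'" and fe: "feasible Xs mX mY N \<delta>' C" and dl: "\<delta>' \<le> \<delta> / mY (Yrange N C)"
        by blast
      have cb: "codebook Xs C" using fe by (simp add: feasible_def)
      have Rp: "0 < mY (Yrange N C)" using R_pos[OF cb] .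
      have cp: "0 < real (card C)" using cardpos[OF cb] by simp
      define d where "d = \<delta>' / real (card C)"
      have "\<delta>' * mY (Yrange N C) \<le> \<delta>" using dl Rp by (simp add: le_divide_eq)
      then have dd: "d * mY (Yrange N C) \<le> \<delta> / real (card C)"
        using cp by (simp add: d_def field_simps)
      show "b \<le> capacity Xs mY Ys N \<delta>"
      proof (cases "\<exists>F. overlap_family mY (Yrange N C) C (YgX N C) d F")
        case True
        define F where "F = (SOME F. overlap_family mY (Yrange N C) C (YgX N C) d F)"
        have oF: "overlap_family mY (Yrange N C) C (YgX N C) d F" unfolding F_def using True by (rule someI_ex)
        then have "admissible_family mY (Yrange N C) C (YgX N C) d F" by (simp add: overlap_family_def)
        from adm_le_cap[OF cb dd this] show ?thesis
          using True by (simp add: b MI_YX_def delta_MI_def F_def[symmetric] d_def[symmetric])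
      next
        case False
        then show ?thesis using cap0 by (simp add: zero_ereal_def b MI_YX_def delta_MI_def d_def[symmetric])
      qed
    qed
  qed
qed

end
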